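(* Let $f_1^0, f_2^0, g_1^0, x^0\in\mathbb{R}$ with $\Delta := f_1^0-f_2^0>0$ and let $N\ge1$ be an integer. Let $\mu_1,\mu_2\ge0$ and $\max\{\mu_1,\mu_2\}<L_1<L_2<\infty$. Let $p_2 := L_1^{-1}\big(1+\frac{L_1^{-1}-L_2^{-1}}{\mu_2^{-1}-L_2^{-1}}\big)+L_1^{-1}\frac{L_1-\mu_2}{L_2-\mu_2}$ (with $1/0$ interpreted as $\infty$ when $\mu_2=0$) and $U:=-\sqrt{\frac{2\Delta}{p_2N}}$. Define $f_1(x)=\frac12L_1(x-x^0)^2+g_1^0(x-x^0)+f_1^0$ and, for $k=0,\dots,N$: $x^k=x^0-k\frac{U}{L_1}$, $g_2^k=g_1^0-(k+1)U$, $f_2^k=f_1(x^k)-\frac{N-k}{N}\Delta$, and for $k=0,\dots,N-1$: $\bar x^k=x^k-\frac{L_2-L_1}{L_2-\mu_2}\frac{U}{L_1}$. Define $f_2:\mathbb{R}\to\mathbb{R}$ by $f_2(x)=\frac12\mu_2(x-x^0)^2+g_2^0(x-x^0)+f_2^0$ for $x\le x^0$; $f_2(x)=\frac12\mu_2(x-x^k)^2+g_2^k(x-x^k)+f_2^k$ for $x\in[x^k,\bar x^k]$; $f_2(x)=\frac12L_2(x-x^{k+1})^2+g_2^{k+1}(x-x^{k+1})+f_2^{k+1}$ for $x\in[\bar x^k,x^{k+1}]$ ($k=0,\dots,N-1$); $f_2(x)=\frac12\mu_2(x-x^N)^2+g_2^N(x-x^N)+f_2^N$ for $x\ge x^N$.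 Then $f_1\in\mathcal{F}_{\mu_1,L_1}$, $f_2\in\mathcal{F}_{\mu_2,L_2}$, and performing $N$ iterations of DCA on $F=f_1-f_2$ starting from $x^0$ yields $$\tfrac12\min_{0\le k\le N}|\nabla f_1(x^k)-\nabla f_2(x^k)|^2=\frac{\Delta}{p_2N}.$$
   Context: For $\mu\in\mathbb{R}$ and $L\in(\mu,\infty]$, $\mathcal{F}_{\mu,L}$ is the class of proper lower semicontinuous functions $f$ with $f-\frac{\mu}{2}|\cdot|^2$ convex and $\frac{L}{2}|\cdot|^2-f$ convex (when $L<\infty$). A DCA iteration from $x$ on $F=f_1-f_2$ selects $g_2\in\partial f_2(x)$ and $x^+\in\operatorname{argmin}_w\{f_1(w)-g_2w\}$, i.e. (for differentiable $f_1$) $\nabla f_1(x^+)=g_2$. *)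

theory Defs
  imports "HOL-Analysis.Analysis"
begin

definition lsc :: "(real \<Rightarrow> real) \<Rightarrow> bool" where
  "lsc f \<longleftrightarrow> (\<forall>x c. c < f x \<longrightarrow> (\<forall>\<^sub>F y in at x. c < f y))"

text \<open>The class F_{mu,L} for finite L (real-valued, hence proper, functions on R).\<close>
definition F_class :: "real \<Rightarrow> real \<Rightarrow> (real \<Rightarrow> real) \<Rightarrow> bool" where
  "F_class \<mu> L f \<longleftrightarrow> lsc f
     \<and> convex_on UNIV (\<lambda>x. f x - \<mu> / 2 * x\<^sup>2)
     \<and> convex_on UNIV (\<lambda>x. L / 2 * x\<^sup>2 - f x)"

definition subdiff :: "(real \<Rightarrow> real) \<Rightarrow> real \<Rightarrow> real set" where
  "subdiff f x = {g. \<forall>w. f x + g * (w - x) \<le> f w}"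

definition dca_step :: "(real \<Rightarrow> real) \<Rightarrow> (real \<Rightarrow> real) \<Rightarrow> real \<Rightarrow> real \<Rightarrow> bool" where
  "dca_step f1 f2 x x' \<longleftrightarrow>
     (\<exists>g \<in> subdiff f2 x. \<forall>w. f1 x' - g * x' \<le> f1 w - g * w)"

definition dca_run :: "(real \<Rightarrow> real) \<Rightarrow> (real \<Rightarrow> real) \<Rightarrow> real \<Rightarrow> nat \<Rightarrow> (nat \<Rightarrow> real) \<Rightarrow> bool" where
  "dca_run f1 f2 x0 N y \<longleftrightarrow> y 0 = x0 \<and> (\<forall>k<N. dca_step f1 f2 (y k) (y (Suc k)))"

text \<open>The constant p_2 (with 1/mu2 read as infinity when mu2 = 0).\<close>
definition p2_const :: "real \<Rightarrow> real \<Rightarrow> real \<Rightarrow> real" where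
  "p2_const \<mu>2 L1 L2 =
     (1 / L1) * (1 + (if \<mu>2 = 0 then 0 else (1 / L1 - 1 / L2) / (1 / \<mu>2 - 1 / L2)))
     + (1 / L1) * ((L1 - \<mu>2) / (L2 - \<mu>2))"

definition U_const :: "real \<Rightarrow> real \<Rightarrow> real \<Rightarrow> real \<Rightarrow> nat \<Rightarrow> real" where
  "U_const \<Delta> \<mu>2 L1 L2 N = - sqrt (2 * \<Delta> / (p2_const \<mu>2 L1 L2 * real N))"

definition hard_f1 :: "real \<Rightarrow> real \<Rightarrow> real \<Rightarrow> real \<Rightarrow> real \<Rightarrow> real" where
  "hard_f1 L1 g10 f10 x0 x = 1/2 * L1 * (x - x0)\<^sup>2 + g10 * (x - x0) + f10"

definition xk :: "real \<Rightarrow> real \<Rightarrow> real \<Rightarrow> nat \<Rightarrow> real" where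
  "xk x0 U L1 k = x0 - real k * U / L1"

definition g2k :: "real \<Rightarrow> real \<Rightarrow> nat \<Rightarrow> real" where
  "g2k g10 U k = g10 - (real k + 1) * U"

definition xbk :: "real \<Rightarrow> real \<Rightarrow> real \<Rightarrow> real \<Rightarrow> real \<Rightarrow> nat \<Rightarrow> real" where
  "xbk x0 U \<mu>2 L1 L2 k = xk x0 U L1 k - (L2 - L1) / (L2 - \<mu>2) * (U / L1)"

text \<open>The piecewise quadratic f_2. On the open range (x^0, x^N), the index k with
  x^k \<le> x < x^{k+1} is computed via a floor (U < 0, so x^k is increasing).\<close>
definition hard_f2 :: "real \<Rightarrow> real \<Rightarrow> real \<Rightarrow> real \<Rightarrow> real \<Rightarrow> real \<Rightarrow> real \<Rightarrow> nat \<Rightarrow> real \<Rightarrow> real" where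
  "hard_f2 f10 f20 g10 x0 \<mu>2 L1 L2 N x =
    (let \<Delta> = f10 - f20;
         U = U_const \<Delta> \<mu>2 L1 L2 N;
         xs = xk x0 U L1;
         g2 = g2k g10 U;
         f2v = (\<lambda>k. hard_f1 L1 g10 f10 x0 (xs k) - (real N - real k) / real N * \<Delta>);
         q = (\<lambda>c k z. 1/2 * c * (z - xs k)\<^sup>2 + g2 k * (z - xs k) + f2v k)
     in if x \<le> x0 then q \<mu>2 0 x
        else if xs N \<le> x then q \<mu>2 N x
        else (let k = nat \<lfloor>(x - x0) * L1 / (- U)\<rfloor>
              in if x \<le> xbk x0 U \<mu>2 L1 L2 k then q \<mu>2 k x else q L2 (Suc k) x))"

end

theory Submission
  imports Defs
begin

lemma glue:
  fixes f p r :: "real \<Rightarrow> real"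
  assumes "a < x" "x < b" "\<And>y. a \<le> y \<Longrightarrow> y \<le> x \<Longrightarrow> f y = p y"
    "\<And>y. x \<le> y \<Longrightarrow> y \<le> b \<Longrightarrow> f y = r y"
    "(p has_real_derivative D) (at x)" "(r has_real_derivative D) (at x)"
  shows "(f has_real_derivative D) (at x)"
proof -
  have px: "f x = p x" using assms(1,3) by auto
  have rx: "f x = r x" using assms(2,4) by auto
  have "(p has_real_derivative D) (at_left x)" by (rule has_field_derivative_at_within[OF assms(5)])
  then have L0: "((\<lambda>y. (p y - p x)/(y - x)) \<longlongrightarrow> D) (at_left x)"
    unfolding has_field_derivative_iff .
  have evL: "eventually (\<lambda>y. (f y - f x)/(y - x) = (p y - p x)/(y - x)) (at_left x)"
    using eventually_at_left_real[OF assms(1)] proof eventually_elim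
    case (elim y) then have "f y = p y" using assms(3) by auto
    then show ?case using px by simp
  qed
  have L: "((\<lambda>y. (f y - f x)/(y - x)) \<longlongrightarrow> D) (at_left x)" using L0 tendsto_cong[OF evL] by simp
  have "(r has_real_derivative D) (at_right x)" by (rule has_field_derivative_at_within[OF assms(6)])
  then have R0: "((\<lambda>y. (r y - r x)/(y - x)) \<longlongrightarrow> D) (at_right x)"
    unfolding has_field_derivative_iff .
  have evR: "eventually (\<lambda>y. (f y - f x)/(y - x) = (r y - r x)/(y - x)) (at_right x)"
    using eventually_at_right_real[OF assms(2)] proof eventually_elim
    case (elim y) then have "f y = r y" using assms(4) by auto
    then show ?case using rx by simp
  qed
  have R: "((\<lambda>y. (f y - f x)/(y - x)) \<longlongrightarrow> D) (at_right x)" using R0 tendsto_cong[OF evR] by simp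
  have "((\<lambda>y. (f y - f x)/(y - x)) \<longlongrightarrow> D) (at x)" using L R filterlim_at_split by blast
  then show ?thesis unfolding has_field_derivative_iff .
qed

lemma subdiff_unique:
  fixes f :: "real \<Rightarrow> real"
  assumes "(f has_real_derivative D) (at x)" "g \<in> subdiff f x"
  shows "g = D"
proof -
  have sg: "\<And>w. f x + g * (w - x) \<le> f w" using assms(2) by (auto simp: subdiff_def)
  have "(f has_real_derivative D) (at_left x)" by (rule has_field_derivative_at_within[OF assms(1)])
  then have L: "((\<lambda>y. (f y - f x)/(y - x)) \<longlongrightarrow> D) (at_left x)"
    unfolding has_field_derivative_iff .
  have "(f has_real_derivative D) (at_right x)" by (rule has_field_derivative_at_within[OF assms(1)])
  then have R: "((\<lambda>y. (f y - f x)/(y - x)) \<longlongrightarrow> D) (at_right x)"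
    unfolding has_field_derivative_iff .
  have "eventually (\<lambda>y. y \<in> {x - 1<..<x}) (at_left x)" using eventually_at_left_real[of "x - 1" x] by simp
  then have eL: "eventually (\<lambda>y. (f y - f x)/(y - x) \<le> g) (at_left x)"
  proof eventually_elim
    case (elim y)
    then have "y - x < 0" by auto
    moreover have "g * (y - x) \<le> f y - f x" using sg[of y] by linarith
    ultimately show ?case by (simp add: divide_le_eq mult.commute)
  qed
  have "eventually (\<lambda>y. y \<in> {x<..<x + 1}) (at_right x)" using eventually_at_right_real[of x "x + 1"] by simp
  then have eR: "eventually (\<lambda>y. g \<le> (f y - f x)/(y - x)) (at_right x)"
  proof eventually_elim
    case (elim y)
    then have "y - x > 0" by auto
    moreover have "g * (y - x) \<le> f y - f x" using sg[of y] by linarith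
    ultimately show ?case by (simp add: le_divide_eq mult.commute)
  qed
  have "D \<le> g" using L eL by (rule tendsto_upperbound) simp
  moreover have "g \<le> D" using R eR by (rule tendsto_lowerbound) simp
  ultimately show ?thesis by simp
qed

lemma mono_union:
  fixes H :: "real \<Rightarrow> real"
  assumes "mono_on A H" "mono_on B H" "c \<in> A" "c \<in> B" "\<forall>x\<in>A. x \<le> c" "\<forall>y\<in>B. c \<le> y"
  shows "mono_on (A \<union> B) H"
proof (rule mono_onI)
  fix x y assume xy: "x \<in> A \<union> B" "y \<in> A \<union> B" "x \<le> y"
  show "H x \<le> H y"
  proof (cases "x \<in> A")
    case xA: True
    show ?thesis
    proof (cases "y \<in> A")
      case True then show ?thesis using xA xy assms(1) by (auto dest: mono_onD)
    next
      case False then have "y \<in> B" using xy by auto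
      then have "H x \<le> H c" "H c \<le> H y" using xA assms by (auto intro: mono_onD)
      then show ?thesis by simp
    qed
  next
    case False then have xB: "x \<in> B" using xy by auto
    then have "c \<le> x" using assms by auto
    have "y \<in> B"
    proof (rule ccontr)
      assume "y \<notin> B" then have "y \<in> A" using xy by auto
      then have "y \<le> c" using assms by auto
      then have "x = c" "y = c" using \<open>c \<le> x\<close> xy by auto
      then show False using \<open>y \<notin> B\<close> assms by auto
    qed
    then show ?thesis using xB xy assms(2) by (auto dest: mono_onD)
  qed
qed

lemma mono_chain:
  fixes H :: "real \<Rightarrow> real" and base u :: real and N :: nat
  assumes u: "u > 0"
    and left: "mono_on {..base} H" and right: "mono_on {base + real N * u..} H"
    and cells: "\<And>k. k < N \<Longrightarrow> mono_on {base + real k * u .. base + real (Suc k) * u} H"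
  shows "mono H"
proof -
  have "n \<le> N \<Longrightarrow> mono_on {..base + real n * u} H" for n
  proof (induction n)
    case 0 then show ?case using left by simp
  next
    case (Suc n)
    have "mono_on ({..base + real n * u} \<union> {base + real n * u .. base + real (Suc n) * u}) H"
      by (rule mono_union[where c="base + real n * u"]) (use Suc cells u in auto)
    moreover have "{..base + real n * u} \<union> {base + real n * u .. base + real (Suc n) * u} = {..base + real (Suc n) * u}"
      using u by (auto simp: distrib_right)
    ultimately show ?case by simp
  qed
  then have "mono_on {..base + real N * u} H" by simp
  then have "mono_on ({..base + real N * u} \<union> {base + real N * u..}) H"
    by (rule mono_union[where c="base + real N * u"]) (use right in auto)
  moreover have "{..base + real N * u} \<union> {base + real N * u..} = UNIV" by auto
  ultimately show ?thesis by (simp add: mono_on_def mono_def)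
qed

definition qq :: "real \<Rightarrow> real \<Rightarrow> real \<Rightarrow> real \<Rightarrow> real \<Rightarrow> real" where
  "qq c xa gk fk z = 1/2 * c * (z - xa)\<^sup>2 + gk * (z - xa) + fk"

lemma qq_glue_gen:
  fixes k :: nat
  assumes "xa = x0 + real k * u" "xa1 = x0 + real (Suc k) * u" "xb = xa + t*u"
    "gk = g10 + (real k + 1) * L1 * u" "gk1 = g10 + (real (Suc k) + 1) * L1 * u"
    "fk = L1/2*(real k*u)\<^sup>2 + g10*(real k*u) + f10 - D + real k * E"
    "fk1 = L1/2*(real (Suc k)*u)\<^sup>2 + g10*(real (Suc k)*u) + f10 - D + real (Suc k) * E"
    "E = (2*L1 - L1*t + m*t)*u\<^sup>2/2" "L1 = L2 - t*(L2 - m)"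
  shows "qq m xa gk fk xb = qq L2 xa1 gk1 fk1 xb"
  unfolding qq_def assms(1-8) unfolding assms(9) by (simp add: field_simps power2_eq_square)

lemma c1_gen: fixes L1 L2 m t :: real assumes "0 < m" "m < L1" "L1 < L2" "t = (L2 - L1)/(L2 - m)"
  shows "((L2 - L1) / (L1 * L2)) / ((L2 - m) / (m * L2)) = m * t / L1"
proof -
  have "L2 - m > 0" "L1 > 0" "L2 > 0" using assms by auto
  then show ?thesis unfolding assms(4) by (simp add: divide_simps)
qed

locale hard =
  fixes f10 f20 g10 x0 \<mu>2 L1 L2 :: real and N :: nat
  assumes Dpos: "f10 - f20 > 0" and N1: "N \<ge> 1" and mu0: "\<mu>2 \<ge> 0"
    and muL: "\<mu>2 < L1" and L12: "L1 < L2"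
begin

definition "p2 = p2_const \<mu>2 L1 L2"
definition "U = U_const (f10 - f20) \<mu>2 L1 L2 N"
definition "u = - U / L1"
definition "t = (L2 - L1) / (L2 - \<mu>2)"
definition "xs k = xk x0 U L1 k"
definition "g2 k = g2k g10 U k"
definition "xb k = xbk x0 U \<mu>2 L1 L2 k"
definition "fv k = hard_f1 L1 g10 f10 x0 (xs k) - (real N - real k) / real N * (f10 - f20)"
definition "q c k z = qq c (xs k) (g2 k) (fv k) z"
definition "qd c k z = c * (z - xs k) + g2 k"
definition "pw A B x = (if x \<le> x0 then A 0 x else if xs N \<le> x then A N x
        else (let k = nat \<lfloor>(x - x0) * L1 / (- U)\<rfloor>
              in if x \<le> xb k then A k x else B (Suc k) x))"
definition "D2 = pw (qd \<mu>2) (qd L2)"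

lemma L1pos: "L1 > 0" using mu0 muL by linarith

lemma t_bounds: "0 < t" "t < 1" "t * (L2 - \<mu>2) = L2 - L1"
  using mu0 muL L12 by (auto simp: t_def field_simps)

lemma p2_eq: "p2 = (2 * L1 - L1 * t + \<mu>2 * t) / L1\<^sup>2"
proof (cases "\<mu>2 = 0")
  case True
  show ?thesis unfolding p2_def p2_const_def t_def using L1pos L12 True
    by (simp add: field_simps power2_eq_square)
next
  case False
  then have m: "\<mu>2 > 0" using mu0 by simp
  have a: "1 / L1 - 1 / L2 = (L2 - L1) / (L1 * L2)" using L1pos L12 by (simp add: field_simps)
  have b: "1 / \<mu>2 - 1 / L2 = (L2 - \<mu>2) / (\<mu>2 * L2)" using m L1pos L12 by (simp add: field_simps)
  have c: "(1 / L1 - 1 / L2) / (1 / \<mu>2 - 1 / L2) = \<mu>2 * t / L1"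
    unfolding a b by (rule c1_gen[OF m muL L12 t_def])
  have d: "(L1 - \<mu>2) / (L2 - \<mu>2) = 1 - t" unfolding t_def using muL L12 by (simp add: field_simps)
  show ?thesis unfolding p2_def p2_const_def c d using False L1pos
    by (simp add: field_simps power2_eq_square)
qed

lemma p2_pos: "p2 > 0"
proof -
  have "L1 * t < L1" using t_bounds L1pos by simp
  moreover have "\<mu>2 * t \<ge> 0" using mu0 t_bounds by simp
  ultimately have "2 * L1 - L1 * t + \<mu>2 * t > 0" using L1pos by linarith
  then show ?thesis unfolding p2_eq using L1pos by simp
qed

lemma U_sq: "U\<^sup>2 = 2 * (f10 - f20) / (p2 * real N)"
proof -
  have "2 * (f10 - f20) / (p2 * real N) \<ge> 0" using Dpos p2_pos N1 by simp
  then show ?thesis by (simp add: U_def U_const_def p2_def)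
qed

lemma U_neg: "U < 0"
proof -
  have "2 * (f10 - f20) / (p2 * real N) > 0" using Dpos p2_pos N1 by simp
  then show ?thesis by (simp add: U_def U_const_def p2_def)
qed

lemma u_pos: "u > 0"
proof -
  have "-U > 0" using U_neg by simp
  then show ?thesis unfolding u_def using L1pos by (simp add: divide_neg_pos U_neg)
qed

lemma U_u: "U = - L1 * u" using L1pos by (simp add: u_def)

lemma xs_eq: "xs k = x0 + real k * u"
  using L1pos by (simp add: xs_def xk_def u_def field_simps)

lemma xb_eq: "xb k = xs k + t * u"
  using L1pos by (simp add: xb_def xbk_def xs_def t_def u_def)

lemma g2_eq: "g2 k = g10 + (real k + 1) * L1 * u"
  using L1pos by (simp add: g2_def g2k_def u_def)

lemma E_eq: "(f10 - f20) / real N = (2 * L1 - L1 * t + \<mu>2 * t) * u\<^sup>2 / 2"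
proof -
  have "U\<^sup>2 = L1\<^sup>2 * u\<^sup>2" by (simp add: U_u power_mult_distrib)
  then have "2 * (f10 - f20) / (p2 * real N) = L1\<^sup>2 * u\<^sup>2" using U_sq by simp
  then have "(f10 - f20) / real N = p2 * L1\<^sup>2 * u\<^sup>2 / 2"
    using p2_pos N1 by (simp add: field_simps)
  then show ?thesis unfolding p2_eq using L1pos by simp
qed

lemma fv_eq: "fv k = L1 / 2 * (real k * u)\<^sup>2 + g10 * (real k * u) + f10 - (f10 - f20) + real k * ((f10 - f20) / real N)"
  using N1 by (simp add: fv_def hard_f1_def xs_eq field_simps)

lemma xs_mono: "k \<le> m \<Longrightarrow> xs k \<le> xs m"
  using u_pos by (simp add: xs_eq mult_right_mono)

lemma xs_strict: "k < m \<Longrightarrow> xs k < xs m"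
  using u_pos by (simp add: xs_eq mult_strict_right_mono)

lemma xb_between: "xs k < xb k" "xb k < xs (Suc k)"
  using t_bounds u_pos by (auto simp: xb_eq xs_eq distrib_right)

lemma q_xs: "q c k (xs k) = fv k" by (simp add: q_def qq_def)
lemma qd_xs: "qd c k (xs k) = g2 k" by (simp add: qd_def)

lemma qd_glue: "qd \<mu>2 k (xb k) = qd L2 (Suc k) (xb k)"
proof -
  have "qd L2 (Suc k) (xb k) - qd \<mu>2 k (xb k) = u * (L1 - L2 + t * (L2 - \<mu>2))"
    by (simp add: qd_def xb_eq xs_eq g2_eq algebra_simps)
  then show ?thesis using t_bounds by simp
qed

lemma q_glue: "q \<mu>2 k (xb k) = q L2 (Suc k) (xb k)"
proof -
  have hL1: "L1 = L2 - t * (L2 - \<mu>2)" using t_bounds by simp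
  show ?thesis unfolding q_def by (rule qq_glue_gen[OF xs_eq xs_eq xb_eq g2_eq g2_eq fv_eq fv_eq E_eq hL1])
qed

end

context hard begin

lemma f2_pw: "hard_f2 f10 f20 g10 x0 \<mu>2 L1 L2 N = pw (q \<mu>2) (q L2)"
  by (intro ext) (simp only: hard_f2_def pw_def q_def qq_def fv_def xs_def g2_def xb_def U_def Let_def)

lemma xs0: "xs 0 = x0" by (simp add: xs_eq)

lemma xsN: "x0 < xs N" using xs_strict[of 0 N] N1 by (simp add: xs0)

lemma floor_cell:
  assumes "xs k \<le> x" "x < xs (Suc k)"
  shows "nat \<lfloor>(x - x0) * L1 / (- U)\<rfloor> = k"
proof -
  have e: "(x - x0) * L1 / (- U) = (x - x0) / u" using L1pos U_neg by (simp add: u_def field_simps)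
  have "real k * u \<le> x - x0" using assms(1) by (simp add: xs_eq)
  then have 1: "real k \<le> (x - x0) / u" using u_pos by (simp add: le_divide_eq)
  have "x - x0 < (real k + 1) * u" using assms(2) by (simp add: xs_eq algebra_simps)
  then have 2: "(x - x0) / u < real k + 1" using u_pos by (simp add: divide_less_eq)
  have "\<lfloor>(x - x0) / u\<rfloor> = int k" using 1 2 by (simp add: floor_eq_iff)
  then show ?thesis using e by simp
qed

lemma cell_exists:
  assumes "x0 \<le> x" "x < xs N"
  shows "\<exists>k<N. xs k \<le> x \<and> x < xs (Suc k)"
proof -
  define r where "r = (x - x0) / u"
  have r0: "r \<ge> 0" using assms u_pos by (simp add: r_def)
  define k where "k = nat \<lfloor>r\<rfloor>"
  have rk: "real k = of_int \<lfloor>r\<rfloor>" using r0 by (simp add: k_def)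
  have k1: "real k \<le> r" "r < real k + 1" using rk by linarith+
  have xr: "x = x0 + r * u" using u_pos by (simp add: r_def)
  have "r * u < real N * u" using assms(2) xr by (simp add: xs_eq)
  then have "r < real N" using u_pos by simp
  then have "k < N" using k1 by linarith
  moreover have "xs k \<le> x" using k1 u_pos xr by (simp add: xs_eq mult_right_mono)
  moreover have "r * u < (real k + 1) * u" using k1 u_pos by (intro mult_strict_right_mono) auto
  then have "x < xs (Suc k)" using xr by (simp add: xs_eq algebra_simps)
  ultimately show ?thesis by blast
qed

lemma pw_left: "x \<le> x0 \<Longrightarrow> pw A B x = A 0 x" by (simp add: pw_def)

lemma pw_right: "xs N \<le> x \<Longrightarrow> pw A B x = A N x" using xsN by (simp add: pw_def)

lemma pw_cell:
  assumes AB: "\<And>j. A j (xs j) = B j (xs j)" and k: "k < N" "xs k \<le> x" "x \<le> xs (Suc k)"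
  shows "pw A B x = (if x \<le> xb k then A k x else B (Suc k) x)"
proof -
  have xbk: "xs k < xb k" "xb k < xs (Suc k)" by (rule xb_between)+
  have sk: "xs (Suc k) \<le> xs N" using k by (intro xs_mono) simp
  show ?thesis
  proof (cases "x \<le> x0")
    case True
    then have "xs k \<le> x0" using k by simp
    then have "k = 0" using xs_strict[of 0 k] by (cases k) (auto simp: xs0)
    have p: "pw A B x = A 0 x" by (rule pw_left[OF True])
    have "x \<le> xb 0" using True xb_between(1)[of 0] unfolding xs0 by linarith
    then show ?thesis using p \<open>k = 0\<close> by simp
  next
    case nl: False
    show ?thesis
    proof (cases "xs N \<le> x")
      case True
      then have x: "x = xs (Suc k)" "x = xs N" using sk k by auto
      then have "Suc k = N"
        using xs_strict[of "Suc k" N] k by (cases "Suc k < N") auto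
      then show ?thesis using x xbk AB[of N] by (simp add: pw_right)
    next
      case nr: False
      show ?thesis
      proof (cases "x < xs (Suc k)")
        case True
        then show ?thesis using nl nr floor_cell[OF k(2) True] by (simp add: pw_def)
      next
        case False
        then have x: "x = xs (Suc k)" using k by simp
        have sN: "Suc k < N"
        proof (rule ccontr)
          assume "\<not> Suc k < N"
          then have "Suc k = N" using k by simp
          then show False using nr x by simp
        qed
        have "xs (Suc k) \<le> x" "x < xs (Suc (Suc k))" using x xs_strict[of "Suc k" "Suc (Suc k)"] by auto
        from floor_cell[OF this] have fl: "nat \<lfloor>(x - x0) * L1 / - U\<rfloor> = Suc k" .
        have "x \<le> xb (Suc k)" using x xb_between(1)[of "Suc k"] by simp
        then have "pw A B x = A (Suc k) x" using nl nr fl by (simp add: pw_def)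
        then show ?thesis using x xbk AB[of "Suc k"] by simp
      qed
    qed
  qed
qed

lemma C1:
  assumes AB: "\<And>j. A j (xs j) = B j (xs j)" and "k < N" "xs k \<le> y" "y \<le> xb k"
  shows "pw A B y = A k y"
proof -
  have "y \<le> xs (Suc k)" using assms(4) xb_between(2)[of k] by simp
  then show ?thesis using pw_cell[of A B, OF AB assms(2,3)] assms(4) by simp
qed

lemma C2:
  assumes AB: "\<And>j. A j (xs j) = B j (xs j)" and G: "\<And>j. A j (xb j) = B (Suc j) (xb j)"
    and "k < N" "xb k \<le> y" "y \<le> xs (Suc k)"
  shows "pw A B y = B (Suc k) y"
proof -
  have "xs k \<le> y" using assms(4) xb_between(1)[of k] by simp
  then have "pw A B y = (if y \<le> xb k then A k y else B (Suc k) y)"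
    using pw_cell[of A B, OF AB assms(3) _ assms(5)] by simp
  then show ?thesis using assms(4) G[of k] by (cases "y \<le> xb k") auto
qed

lemma qAB: "q \<mu>2 j (xs j) = q L2 j (xs j)" by (simp add: q_xs)
lemma qdAB: "qd \<mu>2 j (xs j) = qd L2 j (xs j)" by (simp add: qd_xs)

lemma q_deriv: "(q c k has_real_derivative qd c k z) (at z)"
  unfolding q_def qq_def qd_def
  by (auto intro!: derivative_eq_intros simp: power2_eq_square algebra_simps)

abbreviation "F2 \<equiv> pw (q \<mu>2) (q L2)"

lemmas F2C1 = C1[where A="q \<mu>2" and B="q L2", OF qAB]
lemmas F2C2 = C2[where A="q \<mu>2" and B="q L2", OF qAB q_glue]
lemmas D2C1 = C1[where A="qd \<mu>2" and B="qd L2", OF qdAB, folded D2_def]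
lemmas D2C2 = C2[where A="qd \<mu>2" and B="qd L2", OF qdAB qd_glue, folded D2_def]

lemma glue_same:
  fixes f p :: "real \<Rightarrow> real"
  assumes "a < x" "x < b" "\<And>y. a \<le> y \<Longrightarrow> y \<le> b \<Longrightarrow> f y = p y"
    "(p has_real_derivative D) (at x)"
  shows "(f has_real_derivative D) (at x)"
  by (rule glue[OF assms(1,2) _ _ assms(4) assms(4)]) (use assms(3) assms(1,2) in auto)

lemma F2_deriv: "(F2 has_real_derivative D2 x) (at x)"
proof -
  have xb0: "x0 < xb 0" using xb_between(1)[of 0] by (simp add: xs0)
  consider (a) "x \<le> x0" | (b) "xs N \<le> x" | (c) "x0 < x" "x < xs N" by linarith
  then show ?thesis
  proof cases
    case a
    have D: "D2 x = qd \<mu>2 0 x" using a by (simp add: D2_def pw_left)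
    show ?thesis unfolding D
    proof (rule glue_same[where a="x - 1" and b="xb 0"])
      show "x - 1 < x" by simp
      show "x < xb 0" using a xb0 by simp
      fix y assume y: "x - 1 \<le> y" "y \<le> xb 0"
      show "F2 y = q \<mu>2 0 y"
      proof (cases "y \<le> x0")
        case True then show ?thesis by (simp add: pw_left)
      next
        case False then show ?thesis using F2C1[of 0 y] y N1 by (simp add: xs0)
      qed
    qed (rule q_deriv)
  next
    case b
    have D: "D2 x = qd \<mu>2 N x" using b by (simp add: D2_def pw_right)
    show ?thesis
    proof (cases "x = xs N")
      case False
      then have "xs N < x" using b by simp
      show ?thesis unfolding D
      proof (rule glue_same[where a="xs N" and b="x + 1"])
        fix y assume y: "xs N \<le> y" "y \<le> x + 1"
        then show "F2 y = q \<mu>2 N y" by (simp add: pw_right)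
      qed (use \<open>xs N < x\<close> q_deriv in auto)
    next
      case True
      obtain j where j: "N = Suc j" using N1 by (cases N) auto
      have D': "D2 x = qd L2 N x" using D True qd_xs by simp
      show ?thesis
      proof (rule glue[where a="xb j" and b="x + 1" and p="q L2 N" and r="q \<mu>2 N"])
        show "xb j < x" using True j xb_between(2)[of j] by simp
        show "x < x + 1" by simp
        fix y assume y: "xb j \<le> y" "y \<le> x"
        then show "F2 y = q L2 N y" using F2C2[of j y] j True by simp
      next
        fix y assume y: "x \<le> y" "y \<le> x + 1"
        then show "F2 y = q \<mu>2 N y" using True by (simp add: pw_right)
      next
        show "(q L2 N has_real_derivative D2 x) (at x)" unfolding D' by (rule q_deriv)
        show "(q \<mu>2 N has_real_derivative D2 x) (at x)" unfolding D by (rule q_deriv)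
      qed
    qed
  next
    case c
    obtain k where k: "k < N" "xs k \<le> x" "x < xs (Suc k)" using cell_exists[of x] c by auto
    have xbk: "xs k < xb k" "xb k < xs (Suc k)" by (rule xb_between)+
    consider (c1) "x = xs k" | (c2) "xs k < x" "x < xb k" | (c3) "x = xb k" | (c4) "xb k < x" "x < xs (Suc k)"
      using k by linarith
    then show ?thesis
    proof cases
      case c1
      have "k \<noteq> 0"
      proof
        assume "k = 0"
        then have "x = x0" using c1 xs0 by simp
        then show False using c by simp
      qed
      then obtain j where j: "k = Suc j" by (cases k) auto
      have D: "D2 x = qd \<mu>2 k x" using D2C1[of k x] k c1 xbk by simp
      have D': "D2 x = qd L2 k x" using D c1 qd_xs by simp
      show ?thesis
      proof (rule glue[where a="xb j" and b="xb k" and p="q L2 k" and r="q \<mu>2 k"])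
        show "xb j < x" using c1 j xb_between(2)[of j] by simp
        show "x < xb k" using c1 xbk by simp
        fix y assume y: "xb j \<le> y" "y \<le> x"
        then show "F2 y = q L2 k y" using F2C2[of j y] j c1 k by simp
      next
        fix y assume y: "x \<le> y" "y \<le> xb k"
        then show "F2 y = q \<mu>2 k y" using F2C1[of k y] c1 k by simp
      next
        show "(q L2 k has_real_derivative D2 x) (at x)" unfolding D' by (rule q_deriv)
        show "(q \<mu>2 k has_real_derivative D2 x) (at x)" unfolding D by (rule q_deriv)
      qed
    next
      case c2
      have D: "D2 x = qd \<mu>2 k x" using D2C1[of k x] k c2 by simp
      show ?thesis unfolding D
      proof (rule glue_same[where a="xs k" and b="xb k"])
        fix y assume y: "xs k \<le> y" "y \<le> xb k"
        then show "F2 y = q \<mu>2 k y" using F2C1[of k y] k by simp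
      qed (use c2 q_deriv in auto)
    next
      case c3
      have D: "D2 x = qd \<mu>2 k x" using D2C1[of k x] k c3 by simp
      have D': "D2 x = qd L2 (Suc k) x" using D c3 qd_glue by simp
      show ?thesis
      proof (rule glue[where a="xs k" and b="xs (Suc k)" and p="q \<mu>2 k" and r="q L2 (Suc k)"])
        show "xs k < x" "x < xs (Suc k)" using c3 xbk by auto
        fix y assume y: "xs k \<le> y" "y \<le> x"
        then show "F2 y = q \<mu>2 k y" using F2C1[of k y] c3 k by simp
      next
        fix y assume y: "x \<le> y" "y \<le> xs (Suc k)"
        then show "F2 y = q L2 (Suc k) y" using F2C2[of k y] c3 k by simp
      next
        show "(q L2 (Suc k) has_real_derivative D2 x) (at x)" unfolding D' by (rule q_deriv)
        show "(q \<mu>2 k has_real_derivative D2 x) (at x)" unfolding D by (rule q_deriv)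
      qed
    next
      case c4
      have D: "D2 x = qd L2 (Suc k) x" using D2C2[of k x] k c4 by simp
      show ?thesis unfolding D
      proof (rule glue_same[where a="xb k" and b="xs (Suc k)"])
        fix y assume y: "xb k \<le> y" "y \<le> xs (Suc k)"
        then show "F2 y = q L2 (Suc k) y" using F2C2[of k y] k by simp
      qed (use c4 q_deriv in auto)
    qed
  qed
qed

end

lemma aff_mono:
  fixes f :: "real \<Rightarrow> real"
  assumes "c \<ge> 0" "\<And>y. y \<in> S \<Longrightarrow> f y = c * y + d"
  shows "mono_on S f"
proof (rule mono_onI)
  fix x y assume "x \<in> S" "y \<in> S" "x \<le> y"
  then show "f x \<le> f y" using assms mult_left_mono[of x y c] by simp
qed

lemma lsc_deriv:
  fixes f :: "real \<Rightarrow> real"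
  assumes "\<And>x. (f has_real_derivative D x) (at x)"
  shows "lsc f"
  unfolding lsc_def
proof (intro allI impI)
  fix x c assume c: "c < f x"
  have "isCont f x" using assms by (rule DERIV_isCont)
  then have "(f \<longlongrightarrow> f x) (at x)" by (simp add: isCont_def)
  then show "\<forall>\<^sub>F y in at x. c < f y" using c by (rule order_tendstoD(1))
qed

lemma f1_deriv: "(hard_f1 L1 g10 f10 x0 has_real_derivative (L1 * (x - x0) + g10)) (at x)"
  unfolding hard_f1_def
  by (auto intro!: derivative_eq_intros simp: power2_eq_square algebra_simps)

lemma f1_class:
  assumes "\<mu>1 \<le> L1"
  shows "F_class \<mu>1 L1 (hard_f1 L1 g10 f10 x0)"
  unfolding F_class_def
proof (intro conjI)
  show "lsc (hard_f1 L1 g10 f10 x0)" by (rule lsc_deriv[OF f1_deriv])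
  show "convex_on UNIV (\<lambda>x. hard_f1 L1 g10 f10 x0 x - \<mu>1 / 2 * x\<^sup>2)"
  proof (rule convex_on_realI[where f'="\<lambda>x. L1 * (x - x0) + g10 - \<mu>1 * x"])
    fix x :: real
    show "((\<lambda>x. hard_f1 L1 g10 f10 x0 x - \<mu>1 / 2 * x\<^sup>2) has_real_derivative L1 * (x - x0) + g10 - \<mu>1 * x) (at x)"
      by (rule derivative_eq_intros f1_deriv refl | simp)+
  next
    fix x y :: real assume "x \<le> y"
    then have "(L1 - \<mu>1) * x \<le> (L1 - \<mu>1) * y" using assms by (intro mult_left_mono) auto
    then show "L1 * (x - x0) + g10 - \<mu>1 * x \<le> L1 * (y - x0) + g10 - \<mu>1 * y" by (simp add: algebra_simps)
  qed simp
  show "convex_on UNIV (\<lambda>x. L1 / 2 * x\<^sup>2 - hard_f1 L1 g10 f10 x0 x)"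
  proof (rule convex_on_realI[where f'="\<lambda>x. L1 * x0 - g10"])
    fix x :: real
    show "((\<lambda>x. L1 / 2 * x\<^sup>2 - hard_f1 L1 g10 f10 x0 x) has_real_derivative L1 * x0 - g10) (at x)"
      by (rule derivative_eq_intros f1_deriv refl | simp add: algebra_simps)+
  qed simp_all
qed

lemma f1_argmin:
  assumes L: "L1 > 0"
  shows "(\<forall>w. hard_f1 L1 g10 f10 x0 x' - g * x' \<le> hard_f1 L1 g10 f10 x0 w - g * w) \<longleftrightarrow> x' = x0 + (g - g10) / L1"
proof -
  define m where "m = x0 + (g - g10) / L1"
  define K where "K = f10 - g * x0 - (g - g10)\<^sup>2 / (2 * L1)"
  have id: "hard_f1 L1 g10 f10 x0 w - g * w = L1 / 2 * (w - m)\<^sup>2 + K" for w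
    unfolding hard_f1_def m_def K_def using L by (simp add: field_simps power2_eq_square)
  show ?thesis
  proof
    assume "\<forall>w. hard_f1 L1 g10 f10 x0 x' - g * x' \<le> hard_f1 L1 g10 f10 x0 w - g * w"
    then have "L1 / 2 * (x' - m)\<^sup>2 + K \<le> L1 / 2 * (m - m)\<^sup>2 + K" unfolding id by blast
    then have "(x' - m)\<^sup>2 \<le> 0" using L by (simp add: mult_le_0_iff)
    then have "x' - m = 0" by simp
    then show "x' = x0 + (g - g10) / L1" by (simp add: m_def)
  next
    assume "x' = x0 + (g - g10) / L1"
    then have "x' = m" by (simp add: m_def)
    then show "\<forall>w. hard_f1 L1 g10 f10 x0 x' - g * x' \<le> hard_f1 L1 g10 f10 x0 w - g * w"
      unfolding id using L by simp
  qed
qed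

context hard begin

lemma xs_cell: "{x0 + real k * u .. x0 + real (Suc k) * u} = {xs k .. xs (Suc k)}"
  by (simp add: xs_eq)

lemma cell_split: "{xs k .. xs (Suc k)} = {xs k .. xb k} \<union> {xb k .. xs (Suc k)}"
  using xb_between[of k] by auto

lemma mono_cells:
  fixes H :: "real \<Rightarrow> real"
  assumes "\<And>k. k < N \<Longrightarrow> mono_on {xs k .. xb k} H" "\<And>k. k < N \<Longrightarrow> mono_on {xb k .. xs (Suc k)} H"
    "mono_on {..x0} H" "mono_on {xs N..} H"
  shows "mono H"
proof (rule mono_chain[OF u_pos, where base=x0 and N=N])
  show "mono_on {..x0} H" by fact
  show "mono_on {x0 + real N * u..} H" using assms(4) by (simp add: xs_eq)
  fix k assume k: "k < N"
  have "mono_on ({xs k .. xb k} \<union> {xb k .. xs (Suc k)}) H"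
    by (rule mono_union[where c="xb k"]) (use assms(1,2) k xb_between[of k] in auto)
  then show "mono_on {x0 + real k * u .. x0 + real (Suc k) * u} H"
    unfolding xs_cell cell_split .
qed

lemma H1_mono: "mono (\<lambda>y. D2 y - \<mu>2 * y)"
proof (rule mono_cells)
  fix k assume k: "k < N"
  show "mono_on {xs k .. xb k} (\<lambda>y. D2 y - \<mu>2 * y)"
    by (rule aff_mono[where c=0 and d="g2 k - \<mu>2 * xs k"]) (use k D2C1 in \<open>auto simp: qd_def algebra_simps\<close>)
  show "mono_on {xb k .. xs (Suc k)} (\<lambda>y. D2 y - \<mu>2 * y)"
    by (rule aff_mono[where c="L2 - \<mu>2" and d="g2 (Suc k) - L2 * xs (Suc k)"])
       (use k D2C2 muL L12 in \<open>auto simp: qd_def algebra_simps\<close>)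
next
  show "mono_on {..x0} (\<lambda>y. D2 y - \<mu>2 * y)"
    by (rule aff_mono[where c=0 and d="g2 0 - \<mu>2 * xs 0"]) (auto simp: D2_def pw_left qd_def algebra_simps)
  show "mono_on {xs N..} (\<lambda>y. D2 y - \<mu>2 * y)"
    by (rule aff_mono[where c=0 and d="g2 N - \<mu>2 * xs N"]) (auto simp: D2_def pw_right qd_def algebra_simps)
qed

lemma H2_mono: "mono (\<lambda>y. L2 * y - D2 y)"
proof (rule mono_cells)
  fix k assume k: "k < N"
  show "mono_on {xs k .. xb k} (\<lambda>y. L2 * y - D2 y)"
    by (rule aff_mono[where c="L2 - \<mu>2" and d="\<mu>2 * xs k - g2 k"])
       (use k D2C1 muL L12 in \<open>auto simp: qd_def algebra_simps\<close>)
  show "mono_on {xb k .. xs (Suc k)} (\<lambda>y. L2 * y - D2 y)"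
    by (rule aff_mono[where c=0 and d="L2 * xs (Suc k) - g2 (Suc k)"])
       (use k D2C2 in \<open>auto simp: qd_def algebra_simps\<close>)
next
  show "mono_on {..x0} (\<lambda>y. L2 * y - D2 y)"
    by (rule aff_mono[where c="L2 - \<mu>2" and d="\<mu>2 * xs 0 - g2 0"])
       (use muL L12 in \<open>auto simp: D2_def pw_left qd_def algebra_simps\<close>)
  show "mono_on {xs N..} (\<lambda>y. L2 * y - D2 y)"
    by (rule aff_mono[where c="L2 - \<mu>2" and d="\<mu>2 * xs N - g2 N"])
       (use muL L12 in \<open>auto simp: D2_def pw_right qd_def algebra_simps\<close>)
qed

lemma F2_conv1: "convex_on UNIV (\<lambda>x. F2 x - \<mu>2 / 2 * x\<^sup>2)"
proof (rule convex_on_realI[where f'="\<lambda>y. D2 y - \<mu>2 * y"])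
  fix x :: real
  show "((\<lambda>x. F2 x - \<mu>2 / 2 * x\<^sup>2) has_real_derivative D2 x - \<mu>2 * x) (at x)"
    by (rule derivative_eq_intros F2_deriv refl | simp)+
next
  fix x y :: real assume "x \<le> y"
  then show "D2 x - \<mu>2 * x \<le> D2 y - \<mu>2 * y" using H1_mono by (auto dest: monoD)
qed simp

lemma F2_conv2: "convex_on UNIV (\<lambda>x. L2 / 2 * x\<^sup>2 - F2 x)"
proof (rule convex_on_realI[where f'="\<lambda>y. L2 * y - D2 y"])
  fix x :: real
  show "((\<lambda>x. L2 / 2 * x\<^sup>2 - F2 x) has_real_derivative L2 * x - D2 x) (at x)"
    by (rule derivative_eq_intros F2_deriv refl | simp)+
next
  fix x y :: real assume "x \<le> y"
  then show "L2 * x - D2 x \<le> L2 * y - D2 y" using H2_mono by (auto dest: monoD)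
qed simp

lemma F2_class: "F_class \<mu>2 L2 F2"
  unfolding F_class_def using F2_conv1 F2_conv2 lsc_deriv[OF F2_deriv] by blast

lemma D2_xs: "k \<le> N \<Longrightarrow> D2 (xs k) = g2 k"
proof (cases "k = N")
  case True then show ?thesis by (simp add: D2_def pw_right qd_xs)
next
  case False
  assume "k \<le> N" then have "k < N" using False by simp
  then show ?thesis using D2C1[of k "xs k"] xb_between(1)[of k] by (simp add: qd_xs)
qed

lemma F2_subgrad: "D2 c \<in> subdiff F2 c"
  unfolding subdiff_def
proof (intro CollectI allI)
  fix w
  have "(F2 w - \<mu>2 / 2 * w\<^sup>2) - (F2 c - \<mu>2 / 2 * c\<^sup>2) \<ge> (D2 c - \<mu>2 * c) * (w - c)"
    by (rule convex_on_imp_above_tangent[OF F2_conv1 connected_UNIV])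
       (use F2_deriv[of c] in \<open>auto intro!: derivative_eq_intros\<close>)
  moreover have "\<mu>2 / 2 * (w - c)\<^sup>2 \<ge> 0" using mu0 by simp
  moreover have "- \<mu>2 * c * (w - c) + \<mu>2 / 2 * (w\<^sup>2 - c\<^sup>2) = \<mu>2 / 2 * (w - c)\<^sup>2"
    by (simp add: algebra_simps power2_eq_square)
  ultimately show "F2 c + D2 c * (w - c) \<le> F2 w" by (simp add: algebra_simps)
qed

lemma xs_step: "xs (Suc k) = x0 + (g2 k - g10) / L1"
  using L1pos by (simp add: xs_eq g2_eq)

lemma run_exists: "dca_run (hard_f1 L1 g10 f10 x0) F2 x0 N xs"
  unfolding dca_run_def dca_step_def
proof (intro conjI allI impI)
  show "xs 0 = x0" by (rule xs0)
  fix k assume k: "k < N"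
  have "g2 k \<in> subdiff F2 (xs k)" using F2_subgrad[of "xs k"] D2_xs[of k] k by simp
  moreover have "\<forall>w. hard_f1 L1 g10 f10 x0 (xs (Suc k)) - g2 k * xs (Suc k) \<le> hard_f1 L1 g10 f10 x0 w - g2 k * w"
    using f1_argmin[OF L1pos] xs_step by blast
  ultimately show "\<exists>g\<in>subdiff F2 (xs k). \<forall>w. hard_f1 L1 g10 f10 x0 (xs (Suc k)) - g * xs (Suc k) \<le> hard_f1 L1 g10 f10 x0 w - g * w"
    by blast
qed

lemma run_unique:
  assumes "dca_run (hard_f1 L1 g10 f10 x0) F2 x0 N y"
  shows "k \<le> N \<Longrightarrow> y k = xs k"
proof (induction k)
  case 0 then show ?case using assms by (simp add: dca_run_def xs0)
next
  case (Suc k)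
  then have k: "k < N" by simp
  then have yk: "y k = xs k" using Suc by simp
  from assms k obtain g where g: "g \<in> subdiff F2 (y k)"
    and m: "\<forall>w. hard_f1 L1 g10 f10 x0 (y (Suc k)) - g * y (Suc k) \<le> hard_f1 L1 g10 f10 x0 w - g * w"
    unfolding dca_run_def dca_step_def by blast
  have "g = D2 (xs k)" using subdiff_unique[OF F2_deriv g[unfolded yk]] .
  then have "g = g2 k" using D2_xs[of k] k by simp
  then have "y (Suc k) = x0 + (g2 k - g10) / L1" using m f1_argmin[OF L1pos] by blast
  then show ?case using xs_step by simp
qed

lemma gap: "k \<le> N \<Longrightarrow> deriv (hard_f1 L1 g10 f10 x0) (xs k) - deriv F2 (xs k) = U"
proof -
  assume k: "k \<le> N"
  have "deriv (hard_f1 L1 g10 f10 x0) (xs k) = L1 * (xs k - x0) + g10"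
    by (rule DERIV_imp_deriv[OF f1_deriv])
  moreover have "deriv F2 (xs k) = g2 k" using DERIV_imp_deriv[OF F2_deriv] D2_xs[OF k] by simp
  ultimately show ?thesis by (simp add: xs_eq g2_eq U_u algebra_simps)
qed

lemma final_value:
  assumes "dca_run (hard_f1 L1 g10 f10 x0) F2 x0 N y"
  shows "1/2 * (MIN k\<in>{0..N}. (deriv (hard_f1 L1 g10 f10 x0) (y k) - deriv F2 (y k))\<^sup>2)
          = (f10 - f20) / (p2_const \<mu>2 L1 L2 * real N)"
proof -
  have "(\<lambda>k. (deriv (hard_f1 L1 g10 f10 x0) (y k) - deriv F2 (y k))\<^sup>2) ` {0..N} = {U\<^sup>2}"
  proof -
    have "\<And>k. k \<in> {0..N} \<Longrightarrow> (deriv (hard_f1 L1 g10 f10 x0) (y k) - deriv F2 (y k))\<^sup>2 = U\<^sup>2"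
      using run_unique[OF assms] gap by simp
    moreover have "{0..N} \<noteq> {}" by simp
    ultimately show ?thesis by auto
  qed
  then have M: "(MIN k\<in>{0..N}. (deriv (hard_f1 L1 g10 f10 x0) (y k) - deriv F2 (y k))\<^sup>2) = U\<^sup>2"
    by simp
  have h: "1/2 * U\<^sup>2 = (f10 - f20) / (p2 * real N)" using p2_pos N1 by (simp add: U_sq field_simps)
  show ?thesis unfolding M p2_def[symmetric] by (rule h)
qed

end

theorem proposition6:
  fixes f10 f20 g10 x0 \<mu>1 \<mu>2 L1 L2 :: real and N :: nat
  assumes "f10 - f20 > 0"
    and "N \<ge> 1"
    and "\<mu>1 \<ge> 0" and "\<mu>2 \<ge> 0"
    and "max \<mu>1 \<mu>2 < L1" and "L1 < L2"
  shows "F_class \<mu>1 L1 (hard_f1 L1 g10 f10 x0)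
    \<and> F_class \<mu>2 L2 (hard_f2 f10 f20 g10 x0 \<mu>2 L1 L2 N)
    \<and> (\<exists>y. dca_run (hard_f1 L1 g10 f10 x0) (hard_f2 f10 f20 g10 x0 \<mu>2 L1 L2 N) x0 N y)
    \<and> (\<forall>y. dca_run (hard_f1 L1 g10 f10 x0) (hard_f2 f10 f20 g10 x0 \<mu>2 L1 L2 N) x0 N y \<longrightarrow>
          1/2 * (MIN k\<in>{0..N}. (deriv (hard_f1 L1 g10 f10 x0) (y k)
                                 - deriv (hard_f2 f10 f20 g10 x0 \<mu>2 L1 L2 N) (y k))\<^sup>2)
          = (f10 - f20) / (p2_const \<mu>2 L1 L2 * real N))"
proof -
  interpret H: hard f10 f20 g10 x0 \<mu>2 L1 L2 N
    by unfold_locales (use assms in auto)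
  have m1: "\<mu>1 \<le> L1" using assms(5) by simp
  show ?thesis
    unfolding H.f2_pw
    using f1_class[OF m1] H.F2_class H.run_exists H.final_value by blast
qed

end
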